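(* For every $n\in\mathbb Z$, the vector field $S^{(n)}=\partial_{f_{1-n}}$ is given by $$S^{(n)}=\sum_{m\ge1}\Big((n+m)\varphi^{(n+m)}+\sum_{k=0}^{n+1}A_0^{(k,m)}A_2^{(-k-1,n)}\Big)\frac{\partial}{\partial\varphi^{(m)}},$$ where the inner sum is empty if $n+1<0$.
   Context: Let $\varphi^{(1)},\varphi^{(2)},\dots$ be independent variables, set $\varphi^{(-1)}=1$, $\varphi^{(0)}=0$ and $\varphi^{(j)}=0$ for $j\le-2$, and let $\varphi(\lambda)=\sum_{k\ge-1}\varphi^{(k)}\lambda^k=1/\lambda+\sum_{k\ge1}\varphi^{(k)}\lambda^k$, $\varphi'=d\varphi/d\lambda$. For integers $k$ (possibly negative) and $r\ge0$, $A_r^{(k,n)}=[\lambda^{n-r}](\varphi^k\varphi'^r)$ denotes the coefficient of $\lambda^{n-r}$ in the Laurent series $\varphi^k\varphi'^r$. Notation $\mathfrak P_\varphi$: with $w=1/\varphi(\lambda)=\lambda+O(\lambda^3)$, any Laurent series $F$ in $\lambda$ with finitely many negative powers is uniquely $F=\sum_{k\le m}c_k\varphi(\lambda)^k$ with $c_k$ independent of $\lambda$; $\mathfrak P_\varphi F=F-\sum_{k=0}^mc_k\varphi(\lambda)^k$ (a power series in $\lambda$ without constant term). $f_n=\mathfrak P_\varphi(\lambda^n\varphi')$. For $f=\sum_{i\ge1}f^{(i)}\lambda^i$, $\partial_f=\sum_{i\ge1}f^{(i)}\partial/\partial\varphi^{(i)}$. *)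

theory Defs
  imports "HOL-Computational_Algebra.Formal_Laurent_Series"
begin

unbundle fps_syntax

text \<open>The variables phi^(1), phi^(2), ... are given by an arbitrary sequence c
  (c k = phi^(k) for k \<ge> 1; c 0 is ignored) with values in a field of
  characteristic 0.  The coefficient phi^(j) for an arbitrary integer j:\<close>
definition phi_coeff :: "(nat \<Rightarrow> 'a::field_char_0) \<Rightarrow> int \<Rightarrow> 'a" where
  "phi_coeff c j = (if j = -1 then 1 else if j \<ge> 1 then c (nat j) else 0)"

definition phi :: "(nat \<Rightarrow> 'a::field_char_0) \<Rightarrow> 'a fls" where
  "phi c = fls_X_inv + fps_to_fls (Abs_fps (\<lambda>k. if k = 0 then 0 else c k))"

definition dphi :: "(nat \<Rightarrow> 'a::field_char_0) \<Rightarrow> 'a fls" where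
  "dphi c = fls_deriv (phi c)"

definition A_coeff :: "(nat \<Rightarrow> 'a::field_char_0) \<Rightarrow> nat \<Rightarrow> int \<Rightarrow> int \<Rightarrow> 'a" where
  "A_coeff c r k n = ((phi c) powi k * (dphi c) ^ r) $$ (n - int r)"

definition P_phi :: "(nat \<Rightarrow> 'a::field_char_0) \<Rightarrow> 'a fls \<Rightarrow> 'a fls" where
  "P_phi c F = (THE G. (\<forall>j\<le>0. G $$ j = 0) \<and>
      (\<exists>(M::nat) (d::nat \<Rightarrow> 'a). F - G = (\<Sum>k\<le>M. fls_const (d k) * (phi c) ^ k)))"

definition f_field :: "(nat \<Rightarrow> 'a::field_char_0) \<Rightarrow> int \<Rightarrow> 'a fls" where
  "f_field c n = P_phi c (fls_X_intpow n * dphi c)"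

end

theory Submission
  imports Defs
begin
unbundle fps_syntax

lemma phi_nth: "phi c $$ j = phi_coeff c j"
  unfolding phi_def phi_coeff_def by (auto simp: fls_X_inv_nth)

lemma phi_sub: "fls_subdegree (phi c) = -1"
  by (rule fls_subdegree_eqI) (auto simp: phi_nth phi_coeff_def)

lemma phi_nz: "phi c \<noteq> 0"
proof
  assume "phi c = 0" then have "phi c $$ (-1) = 0" by simp
  thus False by (simp add: phi_nth phi_coeff_def)
qed

lemma dphi_nth: "dphi c $$ j = of_int (j+1) * phi_coeff c (j+1)"
  unfolding dphi_def by (simp add: phi_nth)

lemma dphi_sub: "fls_subdegree (dphi c) = -2"
  by (rule fls_subdegree_eqI) (auto simp: dphi_nth phi_coeff_def)

lemma dphi_nz: "dphi c \<noteq> 0"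
proof
  assume "dphi c = 0" then have "dphi c $$ (-2) = 0" by simp
  thus False by (simp add: dphi_nth phi_coeff_def)
qed

lemma phi_pow_sub: "fls_subdegree (phi c ^ k) = - int k"
  by (simp add: fls_subdegree_pow phi_sub)

lemma phi_pow_lead: "(phi c ^ k) $$ (- int k) = 1"
  using fls_pow_base[of "phi c" k] by (simp add: phi_sub phi_nth phi_coeff_def)

lemma phi_powi_sub: "fls_subdegree (phi c powi i) = - i"
  by (simp add: phi_sub)

lemma res_zero_aux:
  fixes g h :: "'a::field_char_0 fls"
  assumes "fls_deriv g = of_int (int (Suc j)) * h"
  shows "fls_residue h = 0"
proof -
  have "0 = fls_residue (fls_deriv g)" by (simp add: fls_residue_deriv)
  also have "\<dots> = of_int (int (Suc j)) * fls_residue h"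
    unfolding assms by (rule fls_residue_of_int_times)
  finally have e: "of_int (int (Suc j)) * fls_residue h = (0::'a)" by simp
  have "of_int (int (Suc j)) \<noteq> (0::'a)" by (simp only: of_int_of_nat_eq of_nat_eq_0_iff)
  with e show ?thesis by simp
qed

lemma res_powi: "fls_residue (phi c powi i * dphi c) = (if i = -1 then -1 else 0)"
proof (cases "i = -1")
  case True
  have "phi c powi i = inverse (phi c)" using True by (simp add: power_int_def)
  then show ?thesis using True fls_residue_deriv_times_inverse_eq_subdegree(2)[of "phi c"] phi_nz[of c]
    by (simp add: dphi_def phi_sub)
next
  case False
  show ?thesis
  proof (cases "i \<ge> 0")
    case True
    then obtain j where j: "i = int j" by (metis nonneg_eq_int)
    have "fls_deriv (phi c ^ Suc j) = of_int (int (Suc j)) * (phi c powi i * dphi c)"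
      unfolding fls_deriv_power j by (simp add: dphi_def mult.assoc)
    then have "fls_residue (phi c powi i * dphi c) = 0" by (rule res_zero_aux)
    then show ?thesis using False by simp
  next
    case F2: False
    define j where "j = nat (-i-2)"
    have j: "i = - int j - 2" using F2 False unfolding j_def by simp
    define q where "q = inverse (phi c)"
    have pq: "phi c powi i = q ^ Suc (Suc j)" using j F2 unfolding q_def power_int_def
      by (simp add: nat_add_distrib)
    have "fls_deriv (q ^ Suc j) = of_int (int (Suc j)) * (- (phi c powi i * dphi c))"
      unfolding fls_deriv_power pq q_def fls_inverse_deriv
      by (simp add: dphi_def power2_eq_square algebra_simps)
    then have "fls_residue (- (phi c powi i * dphi c)) = 0" by (rule res_zero_aux)
    then show ?thesis using False by simp
  qed
qed

lemma P_exists: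
  "fls_subdegree F \<ge> - int N \<Longrightarrow>
    \<exists>d. \<forall>j\<le>0. (F - (\<Sum>k\<le>N. fls_const (d k) * phi c ^ k)) $$ j = 0"
proof (induction N arbitrary: F)
  case 0
  show ?case
  proof (intro exI[of _ "\<lambda>_. F $$ 0"] allI impI)
    fix j :: int assume "j \<le> 0"
    then show "(F - (\<Sum>k\<le>0. fls_const (F $$ 0) * phi c ^ k)) $$ j = 0"
      using 0 by (cases "j = 0") auto
  qed
next
  case (Suc N)
  define a where "a = F $$ (- int (Suc N))"
  define F' where "F' = F - fls_const a * phi c ^ Suc N"
  have "fls_subdegree F' \<ge> - int N"
  proof (cases "F' = 0")
    case False
    show ?thesis
    proof (rule fls_subdegree_geI[OF False])
      fix k assume k: "k < - int N"
      show "F' $$ k = 0"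
      proof (cases "k = - int (Suc N)")
        case True
        then show ?thesis unfolding F'_def a_def using phi_pow_lead[of c "Suc N"] by simp
      next
        case False
        with k have "k < - int (Suc N)" by simp
        moreover have "(phi c ^ Suc N) $$ k = 0"
          using calculation phi_pow_sub[of c "Suc N"] by simp
        ultimately show ?thesis unfolding F'_def using Suc.prems by simp
      qed
    qed
  qed simp
  from Suc.IH[OF this] obtain d' where
    d': "\<forall>j\<le>0. (F' - (\<Sum>k\<le>N. fls_const (d' k) * phi c ^ k)) $$ j = 0" by blast
  define d where "d = d'(Suc N := a)"
  have "(\<Sum>k\<le>Suc N. fls_const (d k) * phi c ^ k)
      = (\<Sum>k\<le>N. fls_const (d' k) * phi c ^ k) + fls_const a * phi c ^ Suc N"
    unfolding d_def by (simp add: sum.atMost_Suc)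
  then have "F - (\<Sum>k\<le>Suc N. fls_const (d k) * phi c ^ k)
      = F' - (\<Sum>k\<le>N. fls_const (d' k) * phi c ^ k)"
    unfolding F'_def by (simp add: algebra_simps)
  with d' show ?case by metis
qed

definition W :: "(nat \<Rightarrow> 'a::field_char_0) \<Rightarrow> nat \<Rightarrow> 'a fls" where
  "W c i = phi c powi (- int i - 1) * dphi c"

lemma res_G:
  assumes "\<forall>j\<le>0. G $$ j = 0"
  shows "fls_residue (G * W c i) = 0"
proof (cases "G = 0")
  case False
  have g: "fls_subdegree G \<ge> 1"
    by (rule fls_subdegree_geI[OF False]) (use assms in auto)
  have w: "W c i \<noteq> 0" unfolding W_def using phi_nz[of c] dphi_nz[of c] by simp
  have "fls_subdegree (W c i) = int i - 1"
    unfolding W_def using phi_nz[of c] dphi_nz[of c] by (simp add: dphi_sub phi_sub)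
  then have "-1 < fls_subdegree G + fls_subdegree (W c i)" using g by simp
  then show ?thesis by (simp add: fls_times_nth_eq0)
qed simp

lemma res_pow_W: "fls_residue (phi c ^ k * W c i) = (if k = i then -1 else 0)"
proof -
  have "phi c ^ k * W c i = phi c powi (int k + (- int i - 1)) * dphi c"
    unfolding W_def using phi_nz[of c]
    by (simp add: power_int_add power_int_of_nat mult.assoc)
  then show ?thesis using res_powi[of c "int k + (- int i - 1)"] by auto
qed

lemma res_poly_W:
  "fls_residue ((\<Sum>k\<le>M. fls_const (d k) * phi c ^ k) * W c i) = (if i \<le> M then - d i else 0)"
proof -
  have "fls_residue ((\<Sum>k\<le>M. fls_const (d k) * phi c ^ k) * W c i)
     = (\<Sum>k\<le>M. d k * fls_residue (phi c ^ k * W c i))"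
    by (simp only: fls_residue_def sum_distrib_right mult.assoc fls_nth_sum fls_mult_const_nth)
  also have "\<dots> = (\<Sum>k\<le>M. (if k = i then - d i else 0))"
    by (rule sum.cong) (auto simp: res_pow_W simp del: fls_residue_def)
  also have "\<dots> = (if i \<le> M then - d i else 0)" by simp
  finally show ?thesis .
qed


lemma A2_zero:
  assumes "int i > n + 1"
  shows "A_coeff c 2 (- int i - 1) n = 0"
proof -
  have "fls_subdegree (phi c powi (- int i - 1) * dphi c ^ 2) = int i - 3"
    using phi_nz[of c] dphi_nz[of c] by (simp add: phi_sub dphi_sub fls_subdegree_pow)
  then show ?thesis unfolding A_coeff_def using assms by simp
qed

lemma A0_eq: "A_coeff c 0 (int k) m = (phi c ^ k) $$ m"
  by (simp add: A_coeff_def power_int_of_nat)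

lemma key:
  fixes n m :: int
  assumes hG: "\<forall>j\<le>0. G $$ j = 0"
    and hP: "fls_X_intpow (1-n) * dphi c - G = (\<Sum>k\<le>M. fls_const (d k) * phi c ^ k)"
    and m: "m \<ge> 1"
  shows "G $$ m = of_int (n + m) * phi_coeff c (n + m)
    + (\<Sum>k\<in>{0..n+1}. A_coeff c 0 k m * A_coeff c 2 (-k-1) n)"
proof -
  define F where "F = fls_X_intpow (1-n) * dphi c"
  define P where "P = (\<Sum>k\<le>M. fls_const (d k) * phi c ^ k)"
  have FG: "F - G = P" using hP unfolding F_def P_def .
  have A2: "A_coeff c 2 (- int i - 1) n = (if i \<le> M then - d i else 0)" for i
  proof -
    have "F * W c i = fls_X_intpow (1-n) * (phi c powi (- int i - 1) * dphi c ^ 2)"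
      unfolding F_def W_def by (simp add: power2_eq_square mult_ac)
    moreover have e: "-1 + - (1 - n) = n - int 2" by simp
    ultimately have "fls_residue (F * W c i) = A_coeff c 2 (- int i - 1) n"
      unfolding fls_residue_def A_coeff_def fls_X_intpow_times_conv_shift fls_shift_nth e
      by simp
    moreover have "F * W c i = P * W c i + G * W c i"
      using FG by (metis add_diff_cancel diff_add_cancel distrib_right)
    ultimately have "A_coeff c 2 (- int i - 1) n = fls_residue (P * W c i) + fls_residue (G * W c i)"
      by (simp only: fls_residue_add)
    then show ?thesis using res_G[OF hG, of c i] res_poly_W[where M=M and d=d and c=c and i=i] unfolding P_def by simp
  qed
  have Fm: "F $$ m = of_int (n + m) * phi_coeff c (n + m)"
  proof -
    have e: "m + - (1 - n) + 1 = n + m" by simp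
    show ?thesis unfolding F_def fls_X_intpow_times_conv_shift fls_shift_nth dphi_nth e ..
  qed
  have "G = F - P" by (simp add: FG[symmetric])
  then have g1: "G $$ m = F $$ m - P $$ m" by simp
  have g2: "P $$ m = (\<Sum>k\<le>M. d k * (phi c ^ k) $$ m)"
    unfolding P_def by (simp add: fls_nth_sum)
  have g3: "- (\<Sum>k\<le>M. d k * (phi c ^ k) $$ m) = (\<Sum>k\<le>M. A_coeff c 0 (int k) m * A_coeff c 2 (- int k - 1) n)"
    by (simp add: A2 A0_eq sum_negf[symmetric] mult.commute)
  have Gm: "G $$ m = F $$ m + (\<Sum>k\<le>M. A_coeff c 0 (int k) m * A_coeff c 2 (- int k - 1) n)"
    unfolding g1 g2 g3[symmetric] by simp
  define g where "g k = A_coeff c 0 k m * A_coeff c 2 (-k-1) n" for k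
  define N where "N = M + nat (n+1)"
  have S1: "(\<Sum>k\<le>M. A_coeff c 0 (int k) m * A_coeff c 2 (- int k - 1) n) = (\<Sum>k\<le>N. g (int k))"
    unfolding g_def by (rule sum.mono_neutral_left) (auto simp: N_def A2)
  have set: "{0..n+1} = int ` {k. k \<le> N \<and> int k \<le> n+1}"
  proof (intro set_eqI iffI)
    fix x assume x: "x \<in> {0..n+1}"
    then have "x = int (nat x)" "nat x \<le> N" "int (nat x) \<le> n+1" by (auto simp: N_def)
    then show "x \<in> int ` {k. k \<le> N \<and> int k \<le> n+1}" by blast
  qed auto
  have "(\<Sum>k\<in>{0..n+1}. g k) = (\<Sum>k\<in>{k. k \<le> N \<and> int k \<le> n+1}. g (int k))"
    unfolding set by (simp add: sum.reindex)
  also have "\<dots> = (\<Sum>k\<le>N. g (int k))"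
  proof (rule sum.mono_neutral_left)
    show "\<forall>i\<in>{..N} - {k. k \<le> N \<and> int k \<le> n + 1}. g (int i) = 0"
    proof
      fix i assume "i \<in> {..N} - {k. k \<le> N \<and> int k \<le> n + 1}"
      then have "int i > n + 1" by auto
      then show "g (int i) = 0" unfolding g_def using A2_zero[of n i c] by simp
    qed
  qed auto
  finally show ?thesis using Gm Fm S1 unfolding g_def by simp
qed


theorem mainTheorem15:
  fixes c :: "nat \<Rightarrow> 'a::field_char_0" and n m :: int
  assumes "m \<ge> 1"
  shows "f_field c (1 - n) $$ m =
    of_int (n + m) * phi_coeff c (n + m)
    + (\<Sum>k\<in>{0..n+1}. A_coeff c 0 k m * A_coeff c 2 (-k-1) n)"
proof -
  define F where "F = fls_X_intpow (1-n) * dphi c"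
  define Q where "Q = (\<lambda>G. (\<forall>j\<le>0. G $$ j = 0) \<and>
      (\<exists>(M::nat) (d::nat \<Rightarrow> 'a). F - G = (\<Sum>k\<le>M. fls_const (d k) * (phi c) ^ k)))"
  define N where "N = nat (n+1)"
  have "fls_subdegree F = - 1 - n"
    unfolding F_def using fls_subdegree_mult_fls_X_intpow[OF dphi_nz[of c], of "1-n"]
    by (simp only: dphi_sub)
  then have "fls_subdegree F \<ge> - int N" unfolding N_def by simp
  from P_exists[OF this, of c] obtain d where
    d: "\<forall>j\<le>0. (F - (\<Sum>k\<le>N. fls_const (d k) * phi c ^ k)) $$ j = 0" by blast
  define G0 where "G0 = F - (\<Sum>k\<le>N. fls_const (d k) * phi c ^ k)"
  have QG0: "Q G0" unfolding Q_def G0_def using d by (auto simp: G0_def)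
  have Qm: "G $$ j = of_int (n + j) * phi_coeff c (n + j)
    + (\<Sum>k\<in>{0..n+1}. A_coeff c 0 k j * A_coeff c 2 (-k-1) n)" if "Q G" "j \<ge> 1" for G j
  proof -
    from that(1) obtain M d' where "\<forall>j\<le>0. G $$ j = 0"
      "fls_X_intpow (1-n) * dphi c - G = (\<Sum>k\<le>M. fls_const (d' k) * phi c ^ k)"
      unfolding Q_def F_def by blast
    from key[OF this that(2)] show ?thesis .
  qed
  have uniq: "G = G0" if "Q G" for G
  proof (rule fls_eqI)
    fix j show "G $$ j = G0 $$ j"
    proof (cases "j \<le> 0")
      case True then show ?thesis using that QG0 unfolding Q_def by auto
    next
      case False then show ?thesis using Qm[OF that] Qm[OF QG0] by simp
    qed
  qed
  have "P_phi c F = G0"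
    unfolding P_phi_def using QG0 uniq unfolding Q_def by (rule the_equality)
  then have "f_field c (1 - n) = G0" unfolding f_field_def F_def by simp
  then show ?thesis using Qm[OF QG0 assms] by simp
qed

end
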